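(* Let $\alpha\in\mathbb{C}$ be arbitrary. Then there exists an injective homomorphism of Lie superalgebras $\rho_{\alpha}:\Gamma(2,-1-\alpha,\alpha-1)\to P^+(4)$ whose image $\Gamma_\alpha=\rho_\alpha(\Gamma(2,-1-\alpha,\alpha-1))$ is the linear span of the following seventeen elements of $P^+(4)$: $$E^1_\alpha=t^2,\quad F^1_\alpha=\tau^2-2\alpha t^{-2}\xi_1\xi_2\eta_1\eta_2,\quad H^1_\alpha=t\tau,$$ $$E^2_\alpha=\xi_1\xi_2,\quad F^2_\alpha=\eta_1\eta_2,\quad H^2_\alpha=\xi_1\eta_1+\xi_2\eta_2,$$ $$E^3_\alpha=\xi_1\eta_2,\quad F^3_\alpha=\xi_2\eta_1,\quad H^3_\alpha=\xi_1\eta_1-\xi_2\eta_2,$$ $$T^1_\alpha=t\eta_1,\quad T^2_\alpha=t\eta_2,\quad T^3_\alpha=t\xi_1,\quad T^4_\alpha=t\xi_2,$$ $$D^1_\alpha=\tau\xi_1+\alpha t^{-1}\xi_1\xi_2\eta_2,\quad D^2_\alpha=\tau\xi_2-\alpha t^{-1}\xi_1\xi_2\eta_1,$$ $$D^3_\alpha=\tau\eta_1+\alpha t^{-1}\xi_2\eta_1\eta_2,\quad D^4_\alpha=\tau\eta_2-\alpha t^{-1}\xi_1\eta_1\eta_2.$$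
   Context: Definition of $\Gamma(\sigma_1,\sigma_2,\sigma_3)$: Let $V_1,V_2,V_3$ be two-dimensional complex vector spaces, each with a non-degenerate skew-symmetric bilinear form $\psi_i$. Let $\mathfrak{g}_{\bar0}=\mathfrak{sp}(\psi_1)\oplus\mathfrak{sp}(\psi_2)\oplus\mathfrak{sp}(\psi_3)$ and $\mathfrak{g}_{\bar1}=V_1\otimes V_2\otimes V_3$, with $\mathfrak{g}_{\bar0}$ acting on $\mathfrak{g}_{\bar1}$ by the tensor product of the standard representations. For $x_i,y_i\in V_i$ let $P_i(x_i,y_i)\in\mathfrak{sp}(\psi_i)$ be defined by $P_i(x_i,y_i)z_i=\psi_i(y_i,z_i)x_i-\psi_i(z_i,x_i)y_i$. The bracket of two odd elements is $[x_1\otimes x_2\otimes x_3,\,y_1\otimes y_2\otimes y_3]=\sigma_1\psi_2(x_2,y_2)\psi_3(x_3,y_3)P_1(x_1,y_1)+\sigma_2\psi_1(x_1,y_1)\psi_3(x_3,y_3)P_2(x_2,y_2)+\sigma_3\psi_1(x_1,y_1)\psi_2(x_2,y_2)P_3(x_3,y_3)$, where $\sigma_1,\sigma_2,\sigma_3\in\mathbb{C}$ satisfy $\sigma_1+\sigma_2+\sigma_3=0$ (which makes this a Lie superalgebra); the resulting Lie superalgebra is denoted $\Gamma(\sigma_1,\sigma_2,\sigma_3)$ (it is isomorphic to $D(2,1;\sigma_1/\sigma_2)$ when all $\sigma_i\neq0$). Definition of $P^+(4)$: the Poisson superalgebra of differential operators on the supercircle $S^{1|2}$. As a vector space it consists of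 finite sums $\sum_{i\ge0} a_i(t)\tau^i\otimes\omega_i$ with $a_i\in\mathbb{C}[t,t^{-1}]$, $\tau$ an even variable commuting with $t$, and $\omega_i$ in the Grassmann algebra $\Lambda(\xi_1,\xi_2,\eta_1,\eta_2)$ on four odd generators. For homogeneous $A$ of parity $p(A)$, the bracket is $$\{A,B\}=\partial_\tau A\,\partial_t B-\partial_t A\,\partial_\tau B+(-1)^{p(A)+1}\sum_{i=1}^{2}\big(\partial_{\xi_i}A\,\partial_{\eta_i}B+\partial_{\eta_i}A\,\partial_{\xi_i}B\big),$$ where derivatives with respect to odd variables are left derivatives. *)

theory Defs
  imports Complex_Main
begin

section \<open>The Poisson superalgebra P^+(4)\<close>

text \<open>A monomial t^j tau^i xi_S, where the odd generators xi1, xi2, eta1, eta2 are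
  numbered 0, 1, 2, 3 and xi_S denotes the product of the generators in S in
  increasing order.\<close>

type_synonym pmono = "int \<times> nat \<times> nat set"
type_synonym P4 = "pmono \<Rightarrow> complex"

definition psupp :: "P4 \<Rightarrow> pmono set" where
  "psupp f = {m. f m \<noteq> 0}"

definition P4_carrier :: "P4 set" where
  "P4_carrier = {f. finite (psupp f) \<and> (\<forall>j i S. f (j, i, S) \<noteq> 0 \<longrightarrow> S \<subseteq> {0..<4})}"

definition padd :: "P4 \<Rightarrow> P4 \<Rightarrow> P4" where
  "padd f g = (\<lambda>m. f m + g m)"

definition pscale :: "complex \<Rightarrow> P4 \<Rightarrow> P4" where
  "pscale c f = (\<lambda>m. c * f m)"

text \<open>sign of reordering xi_S xi_T into increasing order\<close>
definition gsign :: "nat set \<Rightarrow> nat set \<Rightarrow> complex" where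
  "gsign S T = (-1) ^ card {(a, b). a \<in> S \<and> b \<in> T \<and> b < a}"

definition mcoef :: "pmono \<Rightarrow> pmono \<Rightarrow> pmono \<Rightarrow> complex" where
  "mcoef m1 m2 m =
     (case m1 of (j1, i1, S1) \<Rightarrow> case m2 of (j2, i2, S2) \<Rightarrow> case m of (j, i, S) \<Rightarrow>
       if j1 + j2 = j \<and> i1 + i2 = i \<and> S1 \<inter> S2 = {} \<and> S1 \<union> S2 = S
       then gsign S1 S2 else 0)"

definition pmult :: "P4 \<Rightarrow> P4 \<Rightarrow> P4" where
  "pmult f g = (\<lambda>m. \<Sum>p \<in> psupp f \<times> psupp g. f (fst p) * g (snd p) * mcoef (fst p) (snd p) m)"

definition d_t :: "P4 \<Rightarrow> P4" where
  "d_t f = (\<lambda>(j, i, S). of_int (j + 1) * f (j + 1, i, S))"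

definition d_tau :: "P4 \<Rightarrow> P4" where
  "d_tau f = (\<lambda>(j, i, S). of_nat (i + 1) * f (j, i + 1, S))"

text \<open>left derivative with respect to the odd generator number k\<close>
definition d_odd :: "nat \<Rightarrow> P4 \<Rightarrow> P4" where
  "d_odd k f = (\<lambda>(j, i, S). if k \<in> S then 0
       else (-1) ^ card {s \<in> S. s < k} * f (j, i, insert k S))"

definition even_part :: "P4 \<Rightarrow> P4" where
  "even_part f = (\<lambda>(j, i, S). if even (card S) then f (j, i, S) else 0)"

definition odd_part :: "P4 \<Rightarrow> P4" where
  "odd_part f = (\<lambda>(j, i, S). if odd (card S) then f (j, i, S) else 0)"

text \<open>bracket for a homogeneous A; s = (-1)^(p(A)+1)\<close>
definition hbr :: "complex \<Rightarrow> P4 \<Rightarrow> P4 \<Rightarrow> P4" where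
  "hbr s A B = (\<lambda>m.
      pmult (d_tau A) (d_t B) m - pmult (d_t A) (d_tau B) m
    + s * (\<Sum>i\<in>{0::nat, 1}. pmult (d_odd i A) (d_odd (i + 2) B) m
                            + pmult (d_odd (i + 2) A) (d_odd i B) m))"

definition pbracket :: "P4 \<Rightarrow> P4 \<Rightarrow> P4" where
  "pbracket A B = padd (hbr (-1) (even_part A) B) (hbr 1 (odd_part A) B)"

section \<open>The Lie superalgebra Gamma(sigma1, sigma2, sigma3)\<close>

text \<open>V_i = C^2 (index type bool) with psi(x,y) = x_1 y_2 - x_2 y_1.\<close>

type_synonym vec2 = "bool \<Rightarrow> complex"
type_synonym mat2 = "bool \<Rightarrow> bool \<Rightarrow> complex"
type_synonym Gam = "mat2 \<times> mat2 \<times> mat2 \<times> (bool \<Rightarrow> bool \<Rightarrow> bool \<Rightarrow> complex)"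

definition psi :: "vec2 \<Rightarrow> vec2 \<Rightarrow> complex" where
  "psi x y = x False * y True - x True * y False"

definition mv :: "mat2 \<Rightarrow> vec2 \<Rightarrow> vec2" where
  "mv X x = (\<lambda>r. \<Sum>c\<in>UNIV. X r c * x c)"

definition is_sp :: "mat2 \<Rightarrow> bool" where
  "is_sp X \<longleftrightarrow> (\<forall>x y. psi (mv X x) y + psi x (mv X y) = 0)"

definition ev :: "bool \<Rightarrow> vec2" where
  "ev c = (\<lambda>r. if r = c then 1 else 0)"

text \<open>P(x,y) z = psi(y,z) x - psi(z,x) y, as a matrix\<close>
definition Pop :: "vec2 \<Rightarrow> vec2 \<Rightarrow> mat2" where
  "Pop x y = (\<lambda>r c. psi y (ev c) * x r - psi (ev c) x * y r)"

definition mcomm :: "mat2 \<Rightarrow> mat2 \<Rightarrow> mat2" where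
  "mcomm X Y = (\<lambda>r c. \<Sum>k\<in>UNIV. X r k * Y k c - Y r k * X k c)"

definition madd :: "mat2 \<Rightarrow> mat2 \<Rightarrow> mat2" where
  "madd X Y = (\<lambda>r c. X r c + Y r c)"

text \<open>action of sp1+sp2+sp3 on V1 (x) V2 (x) V3 (tensor product of standard reps)\<close>
definition gact :: "mat2 \<Rightarrow> mat2 \<Rightarrow> mat2 \<Rightarrow> (bool \<Rightarrow> bool \<Rightarrow> bool \<Rightarrow> complex)
                     \<Rightarrow> (bool \<Rightarrow> bool \<Rightarrow> bool \<Rightarrow> complex)" where
  "gact X1 X2 X3 v = (\<lambda>a b c. (\<Sum>a'\<in>UNIV. X1 a a' * v a' b c)
                             + (\<Sum>b'\<in>UNIV. X2 b b' * v a b' c)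
                             + (\<Sum>c'\<in>UNIV. X3 c c' * v a b c'))"

text \<open>bracket of odd elements, extended bilinearly from pure tensors of basis vectors\<close>
definition oddbr1 :: "complex \<Rightarrow> (bool \<Rightarrow> bool \<Rightarrow> bool \<Rightarrow> complex)
                      \<Rightarrow> (bool \<Rightarrow> bool \<Rightarrow> bool \<Rightarrow> complex) \<Rightarrow> mat2" where
  "oddbr1 s v w = (\<lambda>r q. \<Sum>a\<in>UNIV. \<Sum>b\<in>UNIV. \<Sum>c\<in>UNIV. \<Sum>a'\<in>UNIV. \<Sum>b'\<in>UNIV. \<Sum>c'\<in>UNIV.
      v a b c * w a' b' c' * s * psi (ev b) (ev b') * psi (ev c) (ev c') * Pop (ev a) (ev a') r q)"

definition oddbr2 :: "complex \<Rightarrow> (bool \<Rightarrow> bool \<Rightarrow> bool \<Rightarrow> complex)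
                      \<Rightarrow> (bool \<Rightarrow> bool \<Rightarrow> bool \<Rightarrow> complex) \<Rightarrow> mat2" where
  "oddbr2 s v w = (\<lambda>r q. \<Sum>a\<in>UNIV. \<Sum>b\<in>UNIV. \<Sum>c\<in>UNIV. \<Sum>a'\<in>UNIV. \<Sum>b'\<in>UNIV. \<Sum>c'\<in>UNIV.
      v a b c * w a' b' c' * s * psi (ev a) (ev a') * psi (ev c) (ev c') * Pop (ev b) (ev b') r q)"

definition oddbr3 :: "complex \<Rightarrow> (bool \<Rightarrow> bool \<Rightarrow> bool \<Rightarrow> complex)
                      \<Rightarrow> (bool \<Rightarrow> bool \<Rightarrow> bool \<Rightarrow> complex) \<Rightarrow> mat2" where
  "oddbr3 s v w = (\<lambda>r q. \<Sum>a\<in>UNIV. \<Sum>b\<in>UNIV. \<Sum>c\<in>UNIV. \<Sum>a'\<in>UNIV. \<Sum>b'\<in>UNIV. \<Sum>c'\<in>UNIV.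
      v a b c * w a' b' c' * s * psi (ev a) (ev a') * psi (ev b) (ev b') * Pop (ev c) (ev c') r q)"

definition Gam_carrier :: "Gam set" where
  "Gam_carrier = {(X1, X2, X3, v). is_sp X1 \<and> is_sp X2 \<and> is_sp X3}"

definition gadd :: "Gam \<Rightarrow> Gam \<Rightarrow> Gam" where
  "gadd x y = (case x of (X1, X2, X3, v) \<Rightarrow> case y of (Y1, Y2, Y3, w) \<Rightarrow>
      (madd X1 Y1, madd X2 Y2, madd X3 Y3, (\<lambda>a b c. v a b c + w a b c)))"

definition gscale :: "complex \<Rightarrow> Gam \<Rightarrow> Gam" where
  "gscale k x = (case x of (X1, X2, X3, v) \<Rightarrow>
      ((\<lambda>r c. k * X1 r c), (\<lambda>r c. k * X2 r c), (\<lambda>r c. k * X3 r c), (\<lambda>a b c. k * v a b c)))"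

definition gbracket :: "complex \<Rightarrow> complex \<Rightarrow> complex \<Rightarrow> Gam \<Rightarrow> Gam \<Rightarrow> Gam" where
  "gbracket s1 s2 s3 x y = (case x of (X1, X2, X3, v) \<Rightarrow> case y of (Y1, Y2, Y3, w) \<Rightarrow>
      (madd (mcomm X1 Y1) (oddbr1 s1 v w),
       madd (mcomm X2 Y2) (oddbr2 s2 v w),
       madd (mcomm X3 Y3) (oddbr3 s3 v w),
       (\<lambda>a b c. gact X1 X2 X3 w a b c - gact Y1 Y2 Y3 v a b c)))"

definition Gam_even :: "Gam \<Rightarrow> bool" where
  "Gam_even x \<longleftrightarrow> (case x of (X1, X2, X3, v) \<Rightarrow> v = (\<lambda>a b c. 0))"

definition Gam_odd :: "Gam \<Rightarrow> bool" where
  "Gam_odd x \<longleftrightarrow> (case x of (X1, X2, X3, v) \<Rightarrow>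
      X1 = (\<lambda>r c. 0) \<and> X2 = (\<lambda>r c. 0) \<and> X3 = (\<lambda>r c. 0))"

definition is_superhom :: "complex \<Rightarrow> complex \<Rightarrow> complex \<Rightarrow> (Gam \<Rightarrow> P4) \<Rightarrow> bool" where
  "is_superhom s1 s2 s3 \<rho> \<longleftrightarrow>
     \<rho> ` Gam_carrier \<subseteq> P4_carrier \<and>
     (\<forall>x\<in>Gam_carrier. \<forall>y\<in>Gam_carrier. \<rho> (gadd x y) = padd (\<rho> x) (\<rho> y)) \<and>
     (\<forall>k. \<forall>x\<in>Gam_carrier. \<rho> (gscale k x) = pscale k (\<rho> x)) \<and>
     (\<forall>x\<in>Gam_carrier. Gam_even x \<longrightarrow> odd_part (\<rho> x) = (\<lambda>m. 0)) \<and>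
     (\<forall>x\<in>Gam_carrier. Gam_odd x \<longrightarrow> even_part (\<rho> x) = (\<lambda>m. 0)) \<and>
     (\<forall>x\<in>Gam_carrier. \<forall>y\<in>Gam_carrier.
         \<rho> (gbracket s1 s2 s3 x y) = pbracket (\<rho> x) (\<rho> y))"

definition pm :: "complex \<Rightarrow> int \<Rightarrow> nat \<Rightarrow> nat set \<Rightarrow> P4" where
  "pm c j i S = (\<lambda>m. if m = (j, i, S) then c else 0)"

text \<open>xi1 = 0, xi2 = 1, eta1 = 2, eta2 = 3\<close>
definition Gamma_gens :: "complex \<Rightarrow> P4 list" where
  "Gamma_gens \<alpha> =
    [ pm 1 2 0 {},                                             \<comment> \<open>E1\<close>
      padd (pm 1 0 2 {}) (pm (-2 * \<alpha>) (-2) 0 {0, 1, 2, 3}),   \<comment> \<open>F1\<close>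
      pm 1 1 1 {},                                             \<comment> \<open>H1\<close>
      pm 1 0 0 {0, 1},                                         \<comment> \<open>E2\<close>
      pm 1 0 0 {2, 3},                                         \<comment> \<open>F2\<close>
      padd (pm 1 0 0 {0, 2}) (pm 1 0 0 {1, 3}),                \<comment> \<open>H2\<close>
      pm 1 0 0 {0, 3},                                         \<comment> \<open>E3\<close>
      pm 1 0 0 {1, 2},                                         \<comment> \<open>F3\<close>
      padd (pm 1 0 0 {0, 2}) (pm (-1) 0 0 {1, 3}),             \<comment> \<open>H3\<close>
      pm 1 1 0 {2},                                            \<comment> \<open>T1\<close>
      pm 1 1 0 {3},                                            \<comment> \<open>T2\<close>
      pm 1 1 0 {0},                                            \<comment> \<open>T3\<close>
      pm 1 1 0 {1},                                            \<comment> \<open>T4\<close>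
      padd (pm 1 0 1 {0}) (pm \<alpha> (-1) 0 {0, 1, 3}),             \<comment> \<open>D1\<close>
      padd (pm 1 0 1 {1}) (pm (-\<alpha>) (-1) 0 {0, 1, 2}),          \<comment> \<open>D2\<close>
      padd (pm 1 0 1 {2}) (pm \<alpha> (-1) 0 {1, 2, 3}),             \<comment> \<open>D3\<close>
      padd (pm 1 0 1 {3}) (pm (-\<alpha>) (-1) 0 {0, 2, 3}) ]        \<comment> \<open>D4\<close>"

definition lin_span :: "P4 list \<Rightarrow> P4 set" where
  "lin_span L = {f. \<exists>c::nat \<Rightarrow> complex. f = (\<lambda>m. \<Sum>k<length L. c k * (L ! k) m)}"

end

theory Submission
  imports Defs
begin


type_synonym q4 = "bool \<times> bool \<times> bool \<times> bool"
type_synonym mo = "int \<times> nat \<times> q4"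

fun mem :: "nat \<Rightarrow> q4 \<Rightarrow> bool" where
  "mem k (a,b,c,d) = ((k = 0 \<and> a) \<or> (k = 1 \<and> b) \<or> (k = 2 \<and> c) \<or> (k = 3 \<and> d))"

definition bs :: "q4 \<Rightarrow> nat set" where "bs s = {k. mem k s}"

lemma mem_bs[simp]: "k \<in> bs s \<longleftrightarrow> mem k s" by (simp add: bs_def)

lemma bs_sub: "bs s \<subseteq> {0..<4}"
  by (cases s) auto

lemma bs_inj: "bs s = bs t \<longleftrightarrow> s = t"
proof
  assume h: "bs s = bs t"
  have "\<And>k. mem k s = mem k t" using h by (metis mem_bs)
  from this[of 0] this[of 1] this[of 2] this[of 3] show "s = t"
    by (cases s; cases t) auto
qed simp

fun sdel :: "nat \<Rightarrow> q4 \<Rightarrow> q4" where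
  "sdel k (a,b,c,d) = (a \<and> k \<noteq> 0, b \<and> k \<noteq> 1, c \<and> k \<noteq> 2, d \<and> k \<noteq> 3)"
fun sor :: "q4 \<Rightarrow> q4 \<Rightarrow> q4" where
  "sor (a,b,c,d) (a',b',c',d') = (a \<or> a', b \<or> b', c \<or> c', d \<or> d')"
fun dj :: "q4 \<Rightarrow> q4 \<Rightarrow> bool" where
  "dj (a,b,c,d) (a',b',c',d') = (\<not>(a \<and> a') \<and> \<not>(b \<and> b') \<and> \<not>(c \<and> c') \<and> \<not>(d \<and> d'))"
fun cnt :: "nat \<Rightarrow> q4 \<Rightarrow> nat" where
  "cnt k (a,b,c,d) = length (filter id [a \<and> 0 < k, b \<and> 1 < k, c \<and> 2 < k, d \<and> 3 < k])"
fun pcard :: "q4 \<Rightarrow> nat" where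
  "pcard (a,b,c,d) = length (filter id [a,b,c,d])"
definition gsq :: "q4 \<Rightarrow> q4 \<Rightarrow> nat" where
  "gsq s t = length (filter (\<lambda>(a,b). mem a s \<and> mem b t) [(1,0),(2,0),(2,1),(3,0),(3,1),(3,2)])"

lemma bs_sdel: "bs (sdel k s) = bs s - {k}"
  by (cases s) auto
lemma bs_sor: "bs (sor s t) = bs s \<union> bs t"
  by (cases s; cases t) auto
lemma bs_dj: "bs s \<inter> bs t = {} \<longleftrightarrow> dj s t"
  by (cases s; cases t) auto

lemma card_filter_list: "distinct xs \<Longrightarrow> card (set (filter P xs)) = length (filter P xs)"
  by (metis distinct_card distinct_filter set_filter)

lemma cnt_card: "card {x \<in> bs s. x < k} = cnt k s"
proof -
  have "{x \<in> bs s. x < k} = set (filter (\<lambda>j. mem j s \<and> j < k) [0,1,2,3])"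
    by (cases s) auto
  hence "card {x \<in> bs s. x < k} = length (filter (\<lambda>j. mem j s \<and> j < k) [0,1,2,3])"
    by (simp only: card_filter_list) (simp add: card_filter_list)
  thus ?thesis by (cases s) auto
qed

lemma pcard_card: "card (bs s) = pcard s"
proof -
  have "bs s = set (filter (\<lambda>j. mem j s) [0,1,2,3])"
    by (cases s) auto
  hence "card (bs s) = length (filter (\<lambda>j. mem j s) [0,1,2,3])"
    by (simp add: card_filter_list)
  thus ?thesis by (cases s) auto
qed

lemma gsq_gsign: "gsign (bs s) (bs t) = (-1) ^ gsq s t"
proof -
  have "{(a, b). a \<in> bs s \<and> b \<in> bs t \<and> b < a} =
        set (filter (\<lambda>(a,b). mem a s \<and> mem b t) [(1,0),(2,0),(2,1),(3,0),(3,1),(3,2)])"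
    by (cases s; cases t) auto
  moreover have "distinct [(1::nat,0::nat),(2,0),(2,1),(3,0),(3,1),(3,2)]" by simp
  ultimately show ?thesis unfolding gsign_def gsq_def
    by (simp add: card_filter_list)
qed



definition tm :: "mo \<Rightarrow> complex \<Rightarrow> P4" where
  "tm \<mu> c = pm c (fst \<mu>) (fst (snd \<mu>)) (bs (snd (snd \<mu>)))"

definition Lf :: "(mo \<times> complex) list \<Rightarrow> P4" where
  "Lf L = (\<lambda>m. \<Sum>t\<leftarrow>L. tm (fst t) (snd t) m)"

definition zf :: P4 where "zf = (\<lambda>m. 0)"

lemma Lf_Nil: "Lf [] = zf" by (simp add: Lf_def zf_def)
lemma Lf_Cons: "Lf (t # L) = padd (tm (fst t) (snd t)) (Lf L)"
  by (simp add: Lf_def padd_def)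
lemma Lf_append: "Lf (A @ B) = padd (Lf A) (Lf B)"
  by (simp add: Lf_def padd_def fun_eq_iff)

lemma tm_app: "tm (j,i,s) c (j',i',S') = (if j' = j \<and> i' = i \<and> S' = bs s then c else 0)"
  by (simp add: tm_def pm_def)

lemma tm_zero: "tm \<mu> 0 = zf" by (simp add: tm_def pm_def zf_def fun_eq_iff)

lemma padd_zf[simp]: "padd zf f = f" "padd f zf = f" by (simp_all add: padd_def zf_def)

lemma psupp_padd: "psupp (padd f g) \<subseteq> psupp f \<union> psupp g"
  by (auto simp: psupp_def padd_def)

lemma psupp_tm: "psupp (tm \<mu> c) \<subseteq> {(fst \<mu>, fst (snd \<mu>), bs (snd (snd \<mu>)))}"
  by (auto simp: psupp_def tm_def pm_def)

lemma psupp_Lf: "psupp (Lf L) \<subseteq> (\<lambda>\<mu>. (fst \<mu>, fst (snd \<mu>), bs (snd (snd \<mu>)))) ` fst ` set L"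
proof (induction L)
  case Nil then show ?case by (simp add: Lf_Nil psupp_def zf_def)
next
  case (Cons t L)
  show ?case unfolding Lf_Cons using psupp_padd[of "tm (fst t) (snd t)" "Lf L"] psupp_tm[of "fst t" "snd t"] Cons
    by auto
qed

lemma finite_Lf: "finite (psupp (Lf L))"
  using psupp_Lf[of L] finite_subset by blast

lemma Lf_carrier: "Lf L \<in> P4_carrier"
proof -
  have "S \<subseteq> {0..<4}" if "Lf L (j, i, S) \<noteq> 0" for j i S
  proof -
    have "(j,i,S) \<in> psupp (Lf L)" using that by (simp add: psupp_def)
    then obtain t where "t \<in> set L" "S = bs (snd (snd (fst t)))" using psupp_Lf[of L] by auto
    then show ?thesis using bs_sub by auto
  qed
  then show ?thesis unfolding P4_carrier_def using finite_Lf by auto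
qed

definition plin :: "(P4 \<Rightarrow> P4) \<Rightarrow> bool" where
  "plin F \<longleftrightarrow> F zf = zf \<and> (\<forall>f g. F (padd f g) = padd (F f) (F g))"

lemma plin_Lf:
  assumes "plin F" and "\<And>\<mu> c. F (tm \<mu> c) = Lf (G (\<mu>, c))"
  shows "F (Lf L) = Lf (concat (map G L))"
  using assms by (induction L) (auto simp: plin_def Lf_Nil Lf_Cons Lf_append)

lemma plin_d_t: "plin d_t"
  by (auto simp: plin_def d_t_def zf_def padd_def fun_eq_iff algebra_simps)
lemma plin_d_tau: "plin d_tau"
  by (auto simp: plin_def d_tau_def zf_def padd_def fun_eq_iff algebra_simps)
lemma plin_d_odd: "plin (d_odd k)"
  by (auto simp: plin_def d_odd_def zf_def padd_def fun_eq_iff algebra_simps)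
lemma plin_even: "plin even_part"
  by (auto simp: plin_def even_part_def zf_def padd_def fun_eq_iff algebra_simps)
lemma plin_odd: "plin odd_part"
  by (auto simp: plin_def odd_part_def zf_def padd_def fun_eq_iff algebra_simps)

definition Gt :: "mo \<times> complex \<Rightarrow> (mo \<times> complex) list" where
  "Gt t = (case t of ((j,i,s),c) \<Rightarrow> if j = 0 then [] else [((j - 1, i, s), of_int j * c)])"
definition Gtau :: "mo \<times> complex \<Rightarrow> (mo \<times> complex) list" where
  "Gtau t = (case t of ((j,i,s),c) \<Rightarrow> if i = 0 then [] else [((j, i - 1, s), of_nat i * c)])"
definition God :: "nat \<Rightarrow> mo \<times> complex \<Rightarrow> (mo \<times> complex) list" where
  "God k t = (case t of ((j,i,s),c) \<Rightarrow> if mem k s then [((j, i, sdel k s), (-1) ^ cnt k s * c)] else [])"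
definition Gev :: "mo \<times> complex \<Rightarrow> (mo \<times> complex) list" where
  "Gev t = (if even (pcard (snd (snd (fst t)))) then [t] else [])"
definition God' :: "mo \<times> complex \<Rightarrow> (mo \<times> complex) list" where
  "God' t = (if odd (pcard (snd (snd (fst t)))) then [t] else [])"

lemma Lf_single: "Lf [t] = tm (fst t) (snd t)" by (simp add: Lf_Cons Lf_Nil)

lemma d_t_tm: "d_t (tm \<mu> c) = Lf (Gt (\<mu>, c))"
proof -
  obtain j i s where mu: "\<mu> = (j,i,s)" by (cases \<mu>) auto
  show ?thesis
  proof (rule ext, clarify)
    fix j' i' S'
    have "(j' + 1 = j) = (j' = j - 1)" by auto
    then show "d_t (tm \<mu> c) (j', i', S') = Lf (Gt (\<mu>, c)) (j', i', S')"
      by (auto simp: mu Gt_def Lf_Nil Lf_single d_t_def tm_app zf_def)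
  qed
qed

lemma d_tau_tm: "d_tau (tm \<mu> c) = Lf (Gtau (\<mu>, c))"
proof -
  obtain j i s where mu: "\<mu> = (j,i,s)" by (cases \<mu>) auto
  show ?thesis
    by (auto simp: mu Gtau_def Lf_Nil Lf_single d_tau_def fun_eq_iff tm_app zf_def)
qed

lemma d_odd_tm: "d_odd k (tm \<mu> c) = Lf (God k (\<mu>, c))"
proof -
  obtain j i s where mu: "\<mu> = (j,i,s)" by (cases \<mu>) auto
  have key: "(k \<notin> S \<and> insert k S = bs s) \<longleftrightarrow> (mem k s \<and> S = bs (sdel k s))" for S
    by (auto simp: bs_sdel)
  have cc: "mem k s \<Longrightarrow> card {x \<in> bs (sdel k s). x < k} = cnt k s"
  proof -
    have "{x \<in> bs (sdel k s). x < k} = {x \<in> bs s. x < k}" by (auto simp: bs_sdel)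
    thus ?thesis using cnt_card by simp
  qed
  show ?thesis
  proof (rule ext, clarify)
    fix j' i' S'
    show "d_odd k (tm \<mu> c) (j', i', S') = Lf (God k (\<mu>, c)) (j', i', S')"
      using key[of S'] cc
      by (auto simp: mu God_def Lf_Nil Lf_single d_odd_def tm_app zf_def)
  qed
qed

lemma even_tm: "even_part (tm \<mu> c) = Lf (Gev (\<mu>, c))"
proof -
  obtain j i s where mu: "\<mu> = (j,i,s)" by (cases \<mu>) auto
  show ?thesis
    by (auto simp: mu Gev_def Lf_Nil Lf_single even_part_def fun_eq_iff tm_app zf_def pcard_card)
qed

lemma odd_tm: "odd_part (tm \<mu> c) = Lf (God' (\<mu>, c))"
proof -
  obtain j i s where mu: "\<mu> = (j,i,s)" by (cases \<mu>) auto
  show ?thesis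
    by (auto simp: mu God'_def Lf_Nil Lf_single odd_part_def fun_eq_iff tm_app zf_def pcard_card)
qed

lemmas d_t_Lf = plin_Lf[OF plin_d_t d_t_tm]
lemmas d_tau_Lf = plin_Lf[OF plin_d_tau d_tau_tm]
lemmas d_odd_Lf = plin_Lf[OF plin_d_odd d_odd_tm]
lemmas even_Lf = plin_Lf[OF plin_even even_tm]
lemmas odd_Lf = plin_Lf[OF plin_odd odd_tm]



lemma pmult_alt:
  assumes "finite A" "finite B" "psupp f \<subseteq> A" "psupp g \<subseteq> B"
  shows "pmult f g m = (\<Sum>p\<in>A \<times> B. f (fst p) * g (snd p) * mcoef (fst p) (snd p) m)"
  unfolding pmult_def
proof (rule sum.mono_neutral_left)
  show "finite (A \<times> B)" using assms by simp
  show "psupp f \<times> psupp g \<subseteq> A \<times> B" using assms by auto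
  show "\<forall>i\<in>A \<times> B - psupp f \<times> psupp g. f (fst i) * g (snd i) * mcoef (fst i) (snd i) m = 0"
    by (auto simp: psupp_def)
qed

definition fs :: "P4 \<Rightarrow> bool" where "fs f \<longleftrightarrow> finite (psupp f)"

lemma fs_Lf: "fs (Lf L)" by (simp add: fs_def finite_Lf)
lemma fs_padd: "fs f \<Longrightarrow> fs g \<Longrightarrow> fs (padd f g)"
  unfolding fs_def using psupp_padd finite_subset by blast

lemma pmult_padd_left:
  assumes "fs f" "fs g" "fs h"
  shows "pmult (padd f g) h = padd (pmult f h) (pmult g h)"
proof (rule ext)
  fix m
  let ?A = "psupp f \<union> psupp g" and ?B = "psupp h"
  have fA: "finite ?A" "finite ?B" using assms by (auto simp: fs_def)
  have "pmult (padd f g) h m = (\<Sum>p\<in>?A \<times> ?B. padd f g (fst p) * h (snd p) * mcoef (fst p) (snd p) m)"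
    by (rule pmult_alt) (use fA psupp_padd in auto)
  also have "\<dots> = (\<Sum>p\<in>?A \<times> ?B. f (fst p) * h (snd p) * mcoef (fst p) (snd p) m)
                + (\<Sum>p\<in>?A \<times> ?B. g (fst p) * h (snd p) * mcoef (fst p) (snd p) m)"
    by (simp add: padd_def sum.distrib[symmetric] algebra_simps)
  also have "\<dots> = pmult f h m + pmult g h m"
    by (subst (1 2) pmult_alt[of ?A ?B]) (use fA in auto)
  finally show "pmult (padd f g) h m = padd (pmult f h) (pmult g h) m" by (simp add: padd_def)
qed

lemma pmult_padd_right:
  assumes "fs f" "fs g" "fs h"
  shows "pmult h (padd f g) = padd (pmult h f) (pmult h g)"
proof (rule ext)
  fix m
  let ?A = "psupp f \<union> psupp g" and ?B = "psupp h"
  have fA: "finite ?A" "finite ?B" using assms by (auto simp: fs_def)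
  have "pmult h (padd f g) m = (\<Sum>p\<in>?B \<times> ?A. h (fst p) * padd f g (snd p) * mcoef (fst p) (snd p) m)"
    by (rule pmult_alt) (use fA psupp_padd in auto)
  also have "\<dots> = (\<Sum>p\<in>?B \<times> ?A. h (fst p) * f (snd p) * mcoef (fst p) (snd p) m)
                + (\<Sum>p\<in>?B \<times> ?A. h (fst p) * g (snd p) * mcoef (fst p) (snd p) m)"
    by (simp add: padd_def sum.distrib[symmetric] algebra_simps)
  also have "\<dots> = pmult h f m + pmult h g m"
    by (subst (1 2) pmult_alt[of ?B ?A]) (use fA in auto)
  finally show "pmult h (padd f g) m = padd (pmult h f) (pmult h g) m" by (simp add: padd_def)
qed

lemma pmult_zf_left: "pmult zf g = zf"
  by (simp add: pmult_def zf_def psupp_def fun_eq_iff)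
lemma pmult_zf_right: "pmult g zf = zf"
  by (simp add: pmult_def zf_def psupp_def fun_eq_iff)

definition Gmul :: "mo \<times> complex \<Rightarrow> mo \<times> complex \<Rightarrow> (mo \<times> complex) list" where
  "Gmul t1 t2 = (case t1 of ((j1,i1,s1),c1) \<Rightarrow> case t2 of ((j2,i2,s2),c2) \<Rightarrow>
      if dj s1 s2 then [((j1 + j2, i1 + i2, sor s1 s2), c1 * c2 * (-1) ^ gsq s1 s2)] else [])"

lemma psupp_pm: "psupp (pm c j i S) = (if c = 0 then {} else {(j,i,S)})"
  by (auto simp: psupp_def pm_def)

lemma pmult_tm: "pmult (tm \<mu>1 c1) (tm \<mu>2 c2) = Lf (Gmul (\<mu>1, c1) (\<mu>2, c2))"
proof -
  obtain j1 i1 s1 where m1: "\<mu>1 = (j1,i1,s1)" by (cases \<mu>1) auto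
  obtain j2 i2 s2 where m2: "\<mu>2 = (j2,i2,s2)" by (cases \<mu>2) auto
  show ?thesis
  proof (rule ext, clarify)
    fix j i S
    have "pmult (tm \<mu>1 c1) (tm \<mu>2 c2) (j,i,S) = c1 * c2 * mcoef (j1,i1,bs s1) (j2,i2,bs s2) (j,i,S)"
      by (simp only: pmult_def tm_def m1 m2 psupp_pm fst_conv snd_conv) (simp add: pm_def)
    also have "\<dots> = Lf (Gmul (\<mu>1, c1) (\<mu>2, c2)) (j,i,S)"
      by (auto simp: mcoef_def Gmul_def m1 m2 Lf_single Lf_Nil zf_def tm_app bs_dj bs_sor gsq_gsign)
    finally show "pmult (tm \<mu>1 c1) (tm \<mu>2 c2) (j,i,S) = Lf (Gmul (\<mu>1, c1) (\<mu>2, c2)) (j,i,S)" .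
  qed
qed

definition Lmul :: "(mo \<times> complex) list \<Rightarrow> (mo \<times> complex) list \<Rightarrow> (mo \<times> complex) list" where
  "Lmul A B = concat (map (\<lambda>t1. concat (map (\<lambda>t2. Gmul t1 t2) B)) A)"

lemma fs_tm: "fs (tm \<mu> c)" using fs_Lf[of "[(\<mu>,c)]"] by (simp add: Lf_single)

lemma pmult_tm_Lf: "pmult (tm \<mu> c) (Lf B) = Lf (concat (map (\<lambda>t2. Gmul (\<mu>,c) t2) B))"
proof (induction B)
  case Nil then show ?case by (simp add: Lf_Nil pmult_zf_right)
next
  case (Cons t B)
  show ?case
    by (simp add: Lf_Cons Lf_append pmult_padd_right fs_tm fs_Lf Cons pmult_tm[of \<mu> c "fst t" "snd t", simplified])
qed

lemma pmult_Lf: "pmult (Lf A) (Lf B) = Lf (Lmul A B)"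
proof (induction A)
  case Nil then show ?case by (simp add: Lf_Nil pmult_zf_left Lmul_def)
next
  case (Cons t A)
  then show ?case
    by (simp add: Lf_Cons Lf_append pmult_padd_left fs_tm fs_Lf Lmul_def pmult_tm_Lf[of "fst t" "snd t", simplified])
qed



definition Ld :: "(mo \<times> complex \<Rightarrow> (mo \<times> complex) list) \<Rightarrow> (mo \<times> complex) list \<Rightarrow> (mo \<times> complex) list" where
  "Ld G L = concat (map G L)"

definition Lsc :: "complex \<Rightarrow> (mo \<times> complex) list \<Rightarrow> (mo \<times> complex) list" where
  "Lsc k L = map (\<lambda>t. (fst t, k * snd t)) L"

lemma Lf_Lsc: "Lf (Lsc k L) m = k * Lf L m"
  by (induction L) (simp_all add: Lsc_def Lf_def tm_def pm_def algebra_simps)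

definition Lhbr :: "complex \<Rightarrow> (mo \<times> complex) list \<Rightarrow> (mo \<times> complex) list \<Rightarrow> (mo \<times> complex) list" where
  "Lhbr s A B = Lmul (Ld Gtau A) (Ld Gt B) @ Lsc (-1) (Lmul (Ld Gt A) (Ld Gtau B)) @
     Lsc s (Lmul (Ld (God 0) A) (Ld (God 2) B) @ Lmul (Ld (God 2) A) (Ld (God 0) B) @
            Lmul (Ld (God 1) A) (Ld (God 3) B) @ Lmul (Ld (God 3) A) (Ld (God 1) B))"

lemma hbr_Lf: "hbr s (Lf A) (Lf B) = Lf (Lhbr s A B)"
  by (simp add: hbr_def Lhbr_def fun_eq_iff d_t_Lf d_tau_Lf d_odd_Lf pmult_Lf Lf_append padd_def Lf_Lsc
      Ld_def[symmetric] algebra_simps numeral_2_eq_2 numeral_3_eq_3)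

definition Lpbr :: "(mo \<times> complex) list \<Rightarrow> (mo \<times> complex) list \<Rightarrow> (mo \<times> complex) list" where
  "Lpbr A B = Lhbr (-1) (Ld Gev A) B @ Lhbr 1 (Ld God' A) B"

lemma pbracket_Lf: "pbracket (Lf A) (Lf B) = Lf (Lpbr A B)"
  by (simp add: pbracket_def Lpbr_def even_Lf odd_Lf Ld_def[symmetric] hbr_Lf Lf_append)

fun addm :: "mo \<times> complex \<Rightarrow> (mo \<times> complex) list \<Rightarrow> (mo \<times> complex) list" where
  "addm t [] = [t]"
| "addm t (u # L) = (if fst t = fst u then (fst u, snd t + snd u) # L else u # addm t L)"

definition nrm :: "(mo \<times> complex) list \<Rightarrow> (mo \<times> complex) list" where
  "nrm L = foldr addm L []"

lemma Lf_addm: "Lf (addm t L) = Lf (t # L)"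
  by (induction L) (auto simp: Lf_def tm_def pm_def fun_eq_iff algebra_simps)

lemma Lf_nrm: "Lf (nrm L) = Lf L"
  by (induction L) (simp_all add: nrm_def Lf_addm Lf_Cons)

lemma Lf_zero: "list_all (\<lambda>t. snd t = 0) L \<Longrightarrow> Lf L = zf"
  by (induction L) (simp_all add: Lf_Nil Lf_Cons tm_zero)

lemma Lf_eqI:
  assumes "list_all (\<lambda>t. snd t = 0) (nrm (A @ Lsc (-1) B))"
  shows "Lf A = Lf B"
proof -
  have "Lf (A @ Lsc (-1) B) = zf" using Lf_zero[OF assms] Lf_nrm by metis
  hence "\<And>m. Lf A m + (- Lf B m) = 0"
    by (metis Lf_append Lf_Lsc padd_def zf_def mult_minus1)
  thus ?thesis by (simp add: fun_eq_iff add_eq_0_iff)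
qed



definition GL :: "complex \<Rightarrow> (mo \<times> complex) list list" where
  "GL \<alpha> =
    [ [((2,0,(False,False,False,False)),1)],
      [((0,2,(False,False,False,False)),1), ((-2,0,(True,True,True,True)), -2*\<alpha>)],
      [((1,1,(False,False,False,False)),1)],
      [((0,0,(True,True,False,False)),1)],
      [((0,0,(False,False,True,True)),1)],
      [((0,0,(True,False,True,False)),1), ((0,0,(False,True,False,True)),1)],
      [((0,0,(True,False,False,True)),1)],
      [((0,0,(False,True,True,False)),1)],
      [((0,0,(True,False,True,False)),1), ((0,0,(False,True,False,True)),-1)],
      [((1,0,(False,False,True,False)),1)],
      [((1,0,(False,False,False,True)),1)],
      [((1,0,(True,False,False,False)),1)],
      [((1,0,(False,True,False,False)),1)],
      [((0,1,(True,False,False,False)),1), ((-1,0,(True,True,False,True)),\<alpha>)],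
      [((0,1,(False,True,False,False)),1), ((-1,0,(True,True,True,False)),-\<alpha>)],
      [((0,1,(False,False,True,False)),1), ((-1,0,(False,True,True,True)),\<alpha>)],
      [((0,1,(False,False,False,True)),1), ((-1,0,(True,False,True,True)),-\<alpha>)] ]"

lemma bs_eval: "bs (a,b,c,d) = (if a then {0} else {}) \<union> (if b then {1} else {}) \<union> (if c then {2} else {}) \<union> (if d then {3} else {})"
  by (auto simp: bs_def)

lemma Gamma_gens_GL: "Gamma_gens \<alpha> = map Lf (GL \<alpha>)"
  by (simp add: Gamma_gens_def GL_def Lf_Cons Lf_Nil tm_def bs_eval insert_commute)

definition cfs :: "Gam \<Rightarrow> complex list" where
  "cfs x = (case x of (X1,X2,X3,v) \<Rightarrow>
    [X1 False True, - X1 True False / 4, X1 False False,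
     X2 False True, - X2 True False, X2 False False,
     X3 False True, X3 True False, X3 False False,
     -2*\<i>*v False True True, 2*\<i>*v False True False, 2*\<i>*v False False False, 2*\<i>*v False False True,
     -\<i>*v True False False, -\<i>*v True False True, \<i>*v True True True, -\<i>*v True True False])"

definition Rl :: "complex \<Rightarrow> Gam \<Rightarrow> (mo \<times> complex) list" where
  "Rl \<alpha> x = concat (map2 Lsc (cfs x) (GL \<alpha>))"

definition rho :: "complex \<Rightarrow> Gam \<Rightarrow> P4" where
  "rho \<alpha> x = Lf (Rl \<alpha> x)"

lemma mv_eval: "mv X x r = X r False * x False + X r True * x True"
  by (simp add: mv_def UNIV_bool)

lemma is_sp_iff: "is_sp X \<longleftrightarrow> X False False + X True True = 0"
proof -
  have key: "psi (mv X x) y + psi x (mv X y) = (X False False + X True True) * psi x y" for x y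
    unfolding psi_def mv_eval by (simp add: algebra_simps)
  have 1: "psi (ev False) (ev True) = 1" by (simp add: psi_def ev_def)
  show ?thesis
  proof
    assume "is_sp X"
    hence "(X False False + X True True) * psi (ev False) (ev True) = 0"
      unfolding is_sp_def key by blast
    thus "X False False + X True True = 0" using \<open>psi (ev False) (ev True) = 1\<close> by simp
  qed (simp add: is_sp_def key)
qed


lemmas cs = GL_def Lsc_def Lpbr_def Lhbr_def Ld_def Lmul_def Gmul_def Gt_def Gtau_def God_def Gev_def God'_def gsq_def
lemma brk:
  assumes "X1 True True = - X1 False False" "X2 True True = - X2 False False" "X3 True True = - X3 False False"
      "Y1 True True = - Y1 False False" "Y2 True True = - Y2 False False" "Y3 True True = - Y3 False False"
  shows "Lf (Rl \<alpha> (gbracket 2 (-1-\<alpha>) (\<alpha>-1) (X1,X2,X3,v) (Y1,Y2,Y3,w))) = Lf (Lpbr (Rl \<alpha> (X1,X2,X3,v)) (Rl \<alpha> (Y1,Y2,Y3,w)))"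
  apply (rule Lf_eqI)
  apply (simp add: Rl_def cfs_def cs gbracket_def madd_def mcomm_def oddbr1_def oddbr2_def oddbr3_def gact_def Pop_def psi_def ev_def UNIV_bool assms)
  apply (simp add: nrm_def)
  apply (simp add: algebra_simps)
  apply (simp add: field_simps)
  done



lemma span_conv:
  "length cs = length Gs \<Longrightarrow> Lf (concat (map2 Lsc cs Gs)) = (\<lambda>m. \<Sum>k<length cs. cs ! k * Lf (Gs ! k) m)"
proof (induction cs Gs rule: list_induct2)
  case Nil then show ?case by (simp add: Lf_Nil zf_def)
next
  case (Cons c cs g Gs)
  show ?case
    by (simp add: Lf_append padd_def Cons.IH Lf_Lsc sum.lessThan_Suc_shift del: sum.lessThan_Suc)
qed

lemma len_GL: "length (GL \<alpha>) = 17" by (simp add: GL_def)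
lemma len_cfs: "length (cfs x) = 17" by (cases x) (simp add: cfs_def)

lemma rho_span: "rho \<alpha> x = (\<lambda>m. \<Sum>k<17. cfs x ! k * (Gamma_gens \<alpha> ! k) m)"
proof -
  have "rho \<alpha> x = (\<lambda>m. \<Sum>k<17. cfs x ! k * Lf (GL \<alpha> ! k) m)"
    unfolding rho_def Rl_def by (subst span_conv) (simp_all add: len_GL len_cfs)
  also have "\<dots> = (\<lambda>m. \<Sum>k<17. cfs x ! k * (Gamma_gens \<alpha> ! k) m)"
    by (simp add: Gamma_gens_GL len_GL)
  finally show ?thesis .
qed

lemma len_gens: "length (Gamma_gens \<alpha>) = 17" by (simp add: Gamma_gens_GL len_GL)

lemma pscale_Lf: "pscale k (Lf L) = Lf (Lsc k L)"
  by (simp add: pscale_def fun_eq_iff Lf_Lsc)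

lemma Lf_at: "Lf L (j, i, bs s) = sum_list (map snd (filter (\<lambda>t. fst t = (j,i,s)) L))"
proof (induction L)
  case Nil then show ?case by (simp add: Lf_def)
next
  case (Cons t L)
  obtain j' i' s' c where t: "t = ((j',i',s'),c)" by (cases t) auto
  show ?case using Cons by (auto simp: Lf_Cons padd_def t tm_app bs_inj)
qed

definition mk :: "complex \<Rightarrow> complex \<Rightarrow> complex \<Rightarrow> mat2" where
  "mk a b d = (\<lambda>r q. if r then (if q then -a else d) else (if q then b else a))"

definition xc :: "(nat \<Rightarrow> complex) \<Rightarrow> Gam" where
  "xc c = (mk (c 2) (c 0) (-4 * c 1), mk (c 5) (c 3) (- c 4), mk (c 8) (c 6) (c 7),
     (\<lambda>a b d. if a then (if b then (if d then -\<i>*c 15 else \<i>*c 16) else (if d then \<i>*c 14 else \<i> * c 13))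
        else (if b then (if d then \<i>*c 9/2 else -\<i>*c 10/2) else (if d then -\<i>*c 12/2 else -\<i>*c 11/2))))"

lemma xc_carrier: "xc c \<in> Gam_carrier"
  by (simp add: xc_def Gam_carrier_def is_sp_iff mk_def)

lemma map17: "map c [0..<17] = [c 0, c 1, c 2, c 3, c 4, c 5, c 6, c 7, c 8, c 9, c 10, c 11, c 12, c 13, c 14, c 15, c 16]"
  by (simp add: upt_rec numeral_eq_Suc)

lemma cfs_xc0: "cfs (xc c) = [c 0, c 1, c 2, c 3, c 4, c 5, c 6, c 7, c 8, c 9, c 10, c 11, c 12, c 13, c 14, c 15, c 16]"
  by (simp add: xc_def cfs_def mk_def field_simps)

lemma cfs_xc: "k < 17 \<Longrightarrow> cfs (xc c) ! k = c k"
  unfolding cfs_xc0 map17[symmetric] by simp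

theorem proposition2p1:
  fixes \<alpha> :: complex
  shows "\<exists>\<rho>. is_superhom 2 (-1 - \<alpha>) (\<alpha> - 1) \<rho> \<and> inj_on \<rho> Gam_carrier \<and>
             \<rho> ` Gam_carrier = lin_span (Gamma_gens \<alpha>)"
proof (intro exI conjI)
  show "is_superhom 2 (-1 - \<alpha>) (\<alpha> - 1) (rho \<alpha>)"
    unfolding is_superhom_def
  proof (intro conjI ballI allI impI)
    show "rho \<alpha> ` Gam_carrier \<subseteq> P4_carrier" by (auto simp: rho_def Lf_carrier)
  next
    fix x y assume "x \<in> Gam_carrier" "y \<in> Gam_carrier"
    obtain X1 X2 X3 v where x: "x = (X1,X2,X3,v)" by (cases x) auto
    obtain Y1 Y2 Y3 w where y: "y = (Y1,Y2,Y3,w)" by (cases y) auto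
    show "rho \<alpha> (gadd x y) = padd (rho \<alpha> x) (rho \<alpha> y)"
      unfolding rho_def Lf_append[symmetric]
      by (rule Lf_eqI) (simp add: x y gadd_def madd_def Rl_def cfs_def cs nrm_def algebra_simps, (simp add: field_simps)?)
  next
    fix k x assume "x \<in> Gam_carrier"
    obtain X1 X2 X3 v where x: "x = (X1,X2,X3,v)" by (cases x) auto
    show "rho \<alpha> (gscale k x) = pscale k (rho \<alpha> x)"
      unfolding rho_def pscale_Lf
      by (rule Lf_eqI) (simp add: x gscale_def Rl_def cfs_def cs nrm_def algebra_simps, (simp add: field_simps)?)
  next
    fix x assume "x \<in> Gam_carrier" "Gam_even x"
    obtain X1 X2 X3 v where x: "x = (X1,X2,X3,v)" by (cases x) auto
    have v: "v = (\<lambda>a b c. 0)" using \<open>Gam_even x\<close> by (simp add: x Gam_even_def)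
    show "odd_part (rho \<alpha> x) = (\<lambda>m. 0)"
      unfolding rho_def odd_Lf zf_def[symmetric]
      by (rule Lf_zero) (simp add: x v Rl_def cfs_def cs)
  next
    fix x assume "x \<in> Gam_carrier" "Gam_odd x"
    obtain X1 X2 X3 v where x: "x = (X1,X2,X3,v)" by (cases x) auto
    have X: "X1 = (\<lambda>r c. 0)" "X2 = (\<lambda>r c. 0)" "X3 = (\<lambda>r c. 0)"
      using \<open>Gam_odd x\<close> by (simp_all add: x Gam_odd_def)
    show "even_part (rho \<alpha> x) = (\<lambda>m. 0)"
      unfolding rho_def even_Lf zf_def[symmetric]
      by (rule Lf_zero) (simp add: x X Rl_def cfs_def cs)
  next
    fix x y assume xc: "x \<in> Gam_carrier" and yc: "y \<in> Gam_carrier"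
    obtain X1 X2 X3 v where x: "x = (X1,X2,X3,v)" by (cases x) auto
    obtain Y1 Y2 Y3 w where y: "y = (Y1,Y2,Y3,w)" by (cases y) auto
    have tr: "X1 True True = - X1 False False" "X2 True True = - X2 False False" "X3 True True = - X3 False False"
      "Y1 True True = - Y1 False False" "Y2 True True = - Y2 False False" "Y3 True True = - Y3 False False"
      using xc yc by (auto simp: x y Gam_carrier_def is_sp_iff add_eq_0_iff)
    show "rho \<alpha> (gbracket 2 (- 1 - \<alpha>) (\<alpha> - 1) x y) = pbracket (rho \<alpha> x) (rho \<alpha> y)"
      unfolding rho_def pbracket_Lf x y by (rule brk) (simp_all add: tr)
  qed
next
  show "inj_on (rho \<alpha>) Gam_carrier"
  proof (rule inj_onI)
    fix x y assume xc: "x \<in> Gam_carrier" and yc: "y \<in> Gam_carrier" and eq: "rho \<alpha> x = rho \<alpha> y"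
    obtain X1 X2 X3 v where x: "x = (X1,X2,X3,v)" by (cases x) auto
    obtain Y1 Y2 Y3 w where y: "y = (Y1,Y2,Y3,w)" by (cases y) auto
    have tr: "X1 True True = - X1 False False" "X2 True True = - X2 False False" "X3 True True = - X3 False False"
      "Y1 True True = - Y1 False False" "Y2 True True = - Y2 False False" "Y3 True True = - Y3 False False"
      using xc yc by (auto simp: x y Gam_carrier_def is_sp_iff add_eq_0_iff)
    have e: "\<And>m. rho \<alpha> x m = rho \<alpha> y m" using eq by simp
    note E = e[of "(j, i, bs s)" for j i s, unfolded rho_def Lf_at x y]
    have 1: "X1 False True = Y1 False True" using E[of 2 0 "(False,False,False,False)"] by (simp add: Rl_def cfs_def cs)
    have 2: "X1 True False = Y1 True False" using E[of 0 2 "(False,False,False,False)"] by (simp add: Rl_def cfs_def cs)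
    have 3: "X1 False False = Y1 False False" using E[of 1 1 "(False,False,False,False)"] by (simp add: Rl_def cfs_def cs)
    have 4: "X2 False True = Y2 False True" using E[of 0 0 "(True,True,False,False)"] by (simp add: Rl_def cfs_def cs)
    have 5: "X2 True False = Y2 True False" using E[of 0 0 "(False,False,True,True)"] by (simp add: Rl_def cfs_def cs)
    have 6: "X2 False False + X3 False False = Y2 False False + Y3 False False" using E[of 0 0 "(True,False,True,False)"] by (simp add: Rl_def cfs_def cs)
    have 7: "X2 False False - X3 False False = Y2 False False - Y3 False False" using E[of 0 0 "(False,True,False,True)"] by (simp add: Rl_def cfs_def cs)
    have 8: "X3 False True = Y3 False True" using E[of 0 0 "(True,False,False,True)"] by (simp add: Rl_def cfs_def cs)
    have 9: "X3 True False = Y3 True False" using E[of 0 0 "(False,True,True,False)"] by (simp add: Rl_def cfs_def cs)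
    have 10: "v False True True = w False True True" using E[of 1 0 "(False,False,True,False)"] by (simp add: Rl_def cfs_def cs)
    have 11: "v False True False = w False True False" using E[of 1 0 "(False,False,False,True)"] by (simp add: Rl_def cfs_def cs)
    have 12: "v False False False = w False False False" using E[of 1 0 "(True,False,False,False)"] by (simp add: Rl_def cfs_def cs)
    have 13: "v False False True = w False False True" using E[of 1 0 "(False,True,False,False)"] by (simp add: Rl_def cfs_def cs)
    have 14: "v True False False = w True False False" using E[of 0 1 "(True,False,False,False)"] by (simp add: Rl_def cfs_def cs)
    have 15: "v True False True = w True False True" using E[of 0 1 "(False,True,False,False)"] by (simp add: Rl_def cfs_def cs)
    have 16: "v True True True = w True True True" using E[of 0 1 "(False,False,True,False)"] by (simp add: Rl_def cfs_def cs)
    have 17: "v True True False = w True True False" using E[of 0 1 "(False,False,False,True)"] by (simp add: Rl_def cfs_def cs)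
    have s1: "2 * X2 False False = 2 * Y2 False False"
      using arg_cong2[OF 6 7, of "(+)"] by (simp add: algebra_simps)
    have s2: "2 * X3 False False = 2 * Y3 False False"
      using arg_cong2[OF 6 7, of "(-)"] by (simp add: algebra_simps)
    have 18: "X2 False False = Y2 False False" "X3 False False = Y3 False False" using s1 s2 by simp_all
    have "X1 = Y1"
    proof (intro ext)
      fix r q show "X1 r q = Y1 r q" using 1 2 3 tr by (cases r; cases q) simp_all
    qed
    moreover have "X2 = Y2"
    proof (intro ext)
      fix r q show "X2 r q = Y2 r q" using 4 5 18 tr by (cases r; cases q) simp_all
    qed
    moreover have "X3 = Y3"
    proof (intro ext)
      fix r q show "X3 r q = Y3 r q" using 8 9 18 tr by (cases r; cases q) simp_all
    qed
    moreover have "v = w"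
    proof (intro ext)
      fix a b d show "v a b d = w a b d" using 10 11 12 13 14 15 16 17 by (cases a; cases b; cases d) simp_all
    qed
    ultimately show "x = y" by (simp add: x y)
  qed
next
  show "rho \<alpha> ` Gam_carrier = lin_span (Gamma_gens \<alpha>)"
  proof
    show "rho \<alpha> ` Gam_carrier \<subseteq> lin_span (Gamma_gens \<alpha>)"
      by (auto simp: lin_span_def len_gens rho_span)
  next
    show "lin_span (Gamma_gens \<alpha>) \<subseteq> rho \<alpha> ` Gam_carrier"
    proof
      fix f assume "f \<in> lin_span (Gamma_gens \<alpha>)"
      then obtain c where f: "f = (\<lambda>m. \<Sum>k<17. c k * (Gamma_gens \<alpha> ! k) m)"
        by (auto simp: lin_span_def len_gens)
      have "rho \<alpha> (xc c) = f"
        unfolding rho_span f by (simp add: fun_eq_iff cfs_xc)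
      thus "f \<in> rho \<alpha> ` Gam_carrier" using xc_carrier by blast
    qed
  qed
qed


end
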